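(* Let $g\in L^p_w(\mathbb{R}^n)$ and set $(H*g)(t,x)=\int_{\mathbb{R}^n}H(t,x-y)g(y)\,dy$. Then there is a constant $c$, independent of $g$ and $t$, such that $$t^{1/2}\,\|(H*g)(t,\cdot)\|_{L^\infty(\mathbb{R}^n)}\le c\,\|g\|_{L^p_w(\mathbb{R}^n)}\qquad\text{for all }t>0.$$
   Context: Let $n\ge3$, $p>n$, $\alpha=1-\frac np$; $\alpha_1,\dots,\alpha_m\ge0$ with $\sum_{j=1}^m\alpha_j=\alpha$; $\bar x_1,\dots,\bar x_m\in\mathbb{R}^n_+$ fixed (not necessarily distinct) points; $w(x)=\prod_{j=1}^m|x-\bar x_j|^{\alpha_j}$. $L^p_w(\mathbb{R}^n)=\{u: wu\in L^p(\mathbb{R}^n)\}$ with norm $\|wu\|_{L^p(\mathbb{R}^n)}$. $H(t,x)=(4\pi t)^{-n/2}e^{-|x|^2/(4t)}$ is the heat kernel. *)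

theory Defs
  imports "HOL-Analysis.Analysis" "HOL-Probability.Essential_Supremum"
begin

definition upper_half :: "(real ^ 'n::{finite,linorder}) set" where
  "upper_half = {x. x $ (Max (UNIV :: 'n set)) > 0}"

definition weight :: "nat \<Rightarrow> (nat \<Rightarrow> real) \<Rightarrow> (nat \<Rightarrow> real ^ 'n::finite) \<Rightarrow> real ^ 'n \<Rightarrow> real" where
  "weight m a xb x = (\<Prod>j<m. norm (x - xb j) powr a j)"

definition in_Lpw :: "real \<Rightarrow> (real ^ 'n::finite \<Rightarrow> real) \<Rightarrow> (real ^ 'n \<Rightarrow> real) \<Rightarrow> bool" where
  "in_Lpw p w g \<longleftrightarrow> g \<in> borel_measurable lborel \<and> integrable lborel (\<lambda>x. \<bar>w x * g x\<bar> powr p)"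

definition Lpw_norm :: "real \<Rightarrow> (real ^ 'n::finite \<Rightarrow> real) \<Rightarrow> (real ^ 'n \<Rightarrow> real) \<Rightarrow> real" where
  "Lpw_norm p w g = (\<integral>x. \<bar>w x * g x\<bar> powr p \<partial>lborel) powr (1 / p)"

definition heat :: "real \<Rightarrow> real ^ 'n::finite \<Rightarrow> real" where
  "heat t x = (4 * pi * t) powr (- real CARD('n) / 2) * exp (- (norm x)\<^sup>2 / (4 * t))"

definition heat_conv :: "(real ^ 'n::finite \<Rightarrow> real) \<Rightarrow> real \<Rightarrow> real ^ 'n \<Rightarrow> real" where
  "heat_conv g t x = (\<integral>y. heat t (x - y) * g y \<partial>lborel)"

definition Linf_norm :: "(real ^ 'n::finite \<Rightarrow> real) \<Rightarrow> ereal" where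
  "Linf_norm f = esssup lborel (\<lambda>x. ereal \<bar>f x\<bar>)"

end

theory Submission imports Defs "HOL-Probability.Distributions" begin

definition f1 :: "real \<Rightarrow> real \<Rightarrow> ennreal" where
  "f1 b s = (if s = 0 then top else ennreal (\<bar>s\<bar> powr (- b)))"

lemma f1_meas[measurable]: "f1 b \<in> borel_measurable borel"
  unfolding f1_def by measurable

lemma gauss_nn:
  assumes k: "k > 0"
  shows "(\<integral>\<^sup>+s. ennreal (exp (- k * (z - s)\<^sup>2)) \<partial>lborel) = ennreal (sqrt (pi / k))"
proof -
  define \<sigma> where "\<sigma> = 1 / sqrt (2 * k)"
  have sp: "\<sigma> > 0" using k by (simp add: \<sigma>_def)
  have h2: "2 * \<sigma>\<^sup>2 = 1 / k" using k by (simp add: \<sigma>_def power_divide)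
  have eq: "exp (- k * (z - s)\<^sup>2) = sqrt (pi / k) * normal_density z \<sigma> s" for s
  proof -
    have "2 * pi * \<sigma>\<^sup>2 = pi * (2 * \<sigma>\<^sup>2)" by (simp add: algebra_simps)
    also have "\<dots> = pi / k" using h2 by simp
    finally have "sqrt (2 * pi * \<sigma>\<^sup>2) = sqrt (pi / k)" by simp
    moreover have "(s - z)\<^sup>2 / (2 * \<sigma>\<^sup>2) = k * (z - s)\<^sup>2" using h2 k by (simp add: power2_commute)
    ultimately show ?thesis using k by (simp add: normal_density_def)
  qed
  have "(\<integral>\<^sup>+s. ennreal (exp (- k * (z - s)\<^sup>2)) \<partial>lborel)
      = (\<integral>\<^sup>+s. ennreal (sqrt (pi / k)) * ennreal (normal_density z \<sigma> s) \<partial>lborel)"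
    unfolding eq by (rule nn_integral_cong, rule ennreal_mult) (use k in auto)
  also have "\<dots> = ennreal (sqrt (pi / k)) * (\<integral>\<^sup>+s. ennreal (normal_density z \<sigma> s) \<partial>lborel)"
    by (simp add: nn_integral_cmult)
  also have "(\<integral>\<^sup>+s. ennreal (normal_density z \<sigma> s) \<partial>lborel) = 1"
    using sp by (subst nn_integral_eq_integral) auto
  finally show ?thesis by simp
qed

lemma f1_neg[simp]: "f1 b (- s) = f1 b s"
  by (simp add: f1_def)

lemma powr_nn:
  assumes b: "b < 1" and c: "c0 \<ge> 0"
  shows "(\<integral>\<^sup>+s. indicator {0..c0} s * ennreal (s powr (- b)) \<partial>lborel) = ennreal (c0 powr (1 - b) / (1 - b))"
proof -
  have hi: "((\<lambda>s. s powr (- b)) has_integral (c0 powr (- b + 1) / (- b + 1))) {0..c0}"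
    by (rule has_integral_powr_from_0) (use b c in auto)
  have e: "ennreal (indicator {0..c0} x * x powr - b) = indicator {0..c0} x * ennreal (x powr - b)" for x :: real
    by (simp split: split_indicator)
  show ?thesis using nn_integral_has_integral_lebesgue[OF _ hi] by (simp add: add.commute e)
qed

lemma E1:
  assumes b: "b < 1" and c: "c0 \<ge> 0"
  shows "(\<integral>\<^sup>+s. indicator {-c0..c0} s * f1 b s \<partial>lborel) \<le> ennreal (2 * (c0 powr (1 - b) / (1 - b)))"
proof -
  define g where "g s = indicator {0..c0} s * f1 b s" for s
  have gm[measurable]: "g \<in> borel_measurable borel" unfolding g_def by measurable
  have pt: "indicator {-c0..c0} s * f1 b s \<le> g s + g (- s)" for s
    by (cases "s \<ge> 0") (auto simp: g_def indicator_def)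
  have "(\<integral>\<^sup>+s. indicator {-c0..c0} s * f1 b s \<partial>lborel) \<le> (\<integral>\<^sup>+s. g s + g (- s) \<partial>lborel)"
    by (rule nn_integral_mono) (rule pt)
  also have "\<dots> = (\<integral>\<^sup>+s. g s \<partial>lborel) + (\<integral>\<^sup>+s. g (- s) \<partial>lborel)"
    by (rule nn_integral_add) auto
  also have "(\<integral>\<^sup>+s. g (- s) \<partial>lborel) = (\<integral>\<^sup>+s. g s \<partial>lborel)"
    using nn_integral_real_affine[OF gm, of "-1" 0] by simp
  also have "(\<integral>\<^sup>+s. g s \<partial>lborel) = (\<integral>\<^sup>+s. indicator {0..c0} s * ennreal (s powr (- b)) \<partial>lborel)"
  proof (rule nn_integral_cong_AE)
    show "AE s in lborel. g s = indicator {0..c0} s * ennreal (s powr (- b))"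
      using AE_lborel_singleton[of 0] by eventually_elim (auto simp: g_def f1_def indicator_def)
  qed
  also have "\<dots> = ennreal (c0 powr (1 - b) / (1 - b))" by (rule powr_nn[OF b c])
  finally have r: "(\<integral>\<^sup>+s. indicator {-c0..c0} s * f1 b s \<partial>lborel) \<le> ennreal (c0 powr (1 - b) / (1 - b)) + ennreal (c0 powr (1 - b) / (1 - b))" .
  have "ennreal (c0 powr (1 - b) / (1 - b)) + ennreal (c0 powr (1 - b) / (1 - b)) = ennreal (2 * (c0 powr (1 - b) / (1 - b)))"
    using b by (subst ennreal_plus[symmetric]) auto
  with r show ?thesis by simp
qed

lemma E2:
  assumes k: "k > 0" and b: "0 \<le> b" "b < 1" and c: "c0 > 0"
  shows "(\<integral>\<^sup>+s. ennreal (exp (- k * (z - s)\<^sup>2)) * f1 b (s - d) \<partial>lborel)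
     \<le> ennreal (2 * (c0 powr (1 - b) / (1 - b)) + c0 powr (- b) * sqrt (pi / k))"
proof -
  define h where "h s = indicator {-c0..c0} s * f1 b s" for s
  have hm[measurable]: "h \<in> borel_measurable borel" unfolding h_def by measurable
  have pt: "ennreal (exp (- k * (z - s)\<^sup>2)) * f1 b (s - d) \<le> h (s - d) + ennreal (c0 powr (- b)) * ennreal (exp (- k * (z - s)\<^sup>2))" for s
  proof (cases "\<bar>s - d\<bar> \<le> c0")
    case True
    have "ennreal (exp (- k * (z - s)\<^sup>2)) \<le> 1" using k by simp
    then have "ennreal (exp (- k * (z - s)\<^sup>2)) * f1 b (s - d) \<le> 1 * f1 b (s - d)"
      by (rule mult_right_mono) simp
    also have "\<dots> = h (s - d)" using True by (auto simp add: h_def indicator_def abs_le_iff)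
    finally show ?thesis by (rule add_increasing2[rotated]) simp
  next
    case False
    then have ne: "s - d \<noteq> 0" using c by auto
    have "\<bar>s - d\<bar> powr (- b) \<le> c0 powr (- b)"
      by (rule powr_mono2') (use b c False in auto)
    then have "f1 b (s - d) \<le> ennreal (c0 powr (- b))" using ne by (simp add: f1_def)
    then have "ennreal (exp (- k * (z - s)\<^sup>2)) * f1 b (s - d) \<le> ennreal (exp (- k * (z - s)\<^sup>2)) * ennreal (c0 powr (- b))"
      by (rule mult_left_mono) simp
    then show ?thesis by (simp add: mult.commute add_increasing)
  qed
  have "(\<integral>\<^sup>+s. ennreal (exp (- k * (z - s)\<^sup>2)) * f1 b (s - d) \<partial>lborel)
     \<le> (\<integral>\<^sup>+s. h (s - d) + ennreal (c0 powr (- b)) * ennreal (exp (- k * (z - s)\<^sup>2)) \<partial>lborel)"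
    by (rule nn_integral_mono) (rule pt)
  also have "\<dots> = (\<integral>\<^sup>+s. h (s - d) \<partial>lborel) + (\<integral>\<^sup>+s. ennreal (c0 powr (- b)) * ennreal (exp (- k * (z - s)\<^sup>2)) \<partial>lborel)"
    by (rule nn_integral_add) auto
  also have "(\<integral>\<^sup>+s. h (s - d) \<partial>lborel) = (\<integral>\<^sup>+s. h s \<partial>lborel)"
    using nn_integral_real_affine[OF hm, of 1 "- d"] by simp
  also have "(\<integral>\<^sup>+s. ennreal (c0 powr (- b)) * ennreal (exp (- k * (z - s)\<^sup>2)) \<partial>lborel)
       = ennreal (c0 powr (- b)) * ennreal (sqrt (pi / k))"
    using gauss_nn[OF k, of z] by (simp add: nn_integral_cmult)
  also have "(\<integral>\<^sup>+s. h s \<partial>lborel) \<le> ennreal (2 * (c0 powr (1 - b) / (1 - b)))"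
    unfolding h_def by (rule E1) (use b c in auto)
  finally have r: "(\<integral>\<^sup>+s. ennreal (exp (- k * (z - s)\<^sup>2)) * f1 b (s - d) \<partial>lborel)
     \<le> ennreal (2 * (c0 powr (1 - b) / (1 - b))) + ennreal (c0 powr (- b)) * ennreal (sqrt (pi / k))"
    by (simp add: add_right_mono)
  also have "\<dots> = ennreal (2 * (c0 powr (1 - b) / (1 - b)) + c0 powr (- b) * sqrt (pi / k))"
    using b k by (simp add: ennreal_plus ennreal_mult)
  finally show ?thesis .
qed

lemma ND:
  fixes x d :: "'a::euclidean_space"
  assumes e: "e \<in> Basis" and k: "k > 0" and b: "0 \<le> b" "b < 1" and c: "c0 > 0"
  shows "(\<integral>\<^sup>+y. ennreal (exp (- k * (norm (x - y))\<^sup>2)) * f1 b ((y - d) \<bullet> e) \<partial>lborel)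
     \<le> ennreal (sqrt (pi / k) ^ (DIM('a) - 1) * (2 * (c0 powr (1 - b) / (1 - b)) + c0 powr (- b) * sqrt (pi / k)))"
proof -
  define h where "h bb s = ennreal (exp (- k * (x \<bullet> bb - s)\<^sup>2)) * (if bb = e then f1 b (s - d \<bullet> e) else 1)" for bb s
  have hm[measurable]: "h bb \<in> borel_measurable borel" for bb unfolding h_def by measurable
  have eq: "ennreal (exp (- k * (norm (x - y))\<^sup>2)) * f1 b ((y - d) \<bullet> e) = (\<Prod>bb\<in>Basis. h bb (y \<bullet> bb))" for y
  proof -
    have "(norm (x - y))\<^sup>2 = (\<Sum>bb\<in>Basis. (x \<bullet> bb - y \<bullet> bb)\<^sup>2)"
    proof -
      have "(norm (x - y))\<^sup>2 = (x - y) \<bullet> (x - y)" by (rule power2_norm_eq_inner)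
      also have "\<dots> = (\<Sum>bb\<in>Basis. ((x - y) \<bullet> bb) * ((x - y) \<bullet> bb))" by (rule euclidean_inner)
      finally show ?thesis by (simp add: inner_diff_left power2_eq_square)
    qed
    then have "exp (- k * (norm (x - y))\<^sup>2) = (\<Prod>bb\<in>Basis. exp (- k * (x \<bullet> bb - y \<bullet> bb)\<^sup>2))"
      by (simp add: sum_distrib_left exp_sum flip: sum_negf)
    then have "ennreal (exp (- k * (norm (x - y))\<^sup>2)) = (\<Prod>bb\<in>Basis. ennreal (exp (- k * (x \<bullet> bb - y \<bullet> bb)\<^sup>2)))"
      by (simp add: prod_ennreal)
    moreover have "f1 b ((y - d) \<bullet> e) = (\<Prod>bb\<in>Basis. (if bb = e then f1 b (y \<bullet> bb - d \<bullet> e) else 1))"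
      using e by (simp add: inner_diff_left)
    ultimately show ?thesis by (simp add: h_def prod.distrib)
  qed
  have "(\<integral>\<^sup>+y. ennreal (exp (- k * (norm (x - y))\<^sup>2)) * f1 b ((y - d) \<bullet> e) \<partial>lborel)
      = (\<integral>\<^sup>+y. (\<Prod>bb\<in>Basis. h bb (y \<bullet> bb)) \<partial>lborel)"
    by (rule nn_integral_cong) (rule eq)
  also have "\<dots> = (\<Prod>bb\<in>Basis. (\<integral>\<^sup>+s. h bb s \<partial>lborel))"
    by (rule nn_integral_lborel_prod) auto
  also have "\<dots> = (\<integral>\<^sup>+s. h e s \<partial>lborel) * (\<Prod>bb\<in>Basis - {e}. (\<integral>\<^sup>+s. h bb s \<partial>lborel))"
    using e by (simp add: prod.remove)
  also have "(\<Prod>bb\<in>Basis - {e}. (\<integral>\<^sup>+s. h bb s \<partial>lborel)) = (\<Prod>bb\<in>Basis - {e}. ennreal (sqrt (pi / k)))"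
  proof (rule prod.cong)
    fix bb assume "bb \<in> Basis - {e}"
    then show "(\<integral>\<^sup>+s. h bb s \<partial>lborel) = ennreal (sqrt (pi / k))"
      using gauss_nn[OF k, of "x \<bullet> bb"] by (simp add: h_def)
  qed simp
  also have "\<dots> = ennreal (sqrt (pi / k) ^ (DIM('a) - 1))"
    using e k by (simp add: ennreal_power card_Diff_singleton)
  also have "(\<integral>\<^sup>+s. h e s \<partial>lborel) \<le> ennreal (2 * (c0 powr (1 - b) / (1 - b)) + c0 powr (- b) * sqrt (pi / k))"
    unfolding h_def using E2[OF k b c, of "x \<bullet> e" "d \<bullet> e"] by simp
  finally show ?thesis
    using b c k by (simp add: ennreal_mult'' mult.commute mult_right_mono)
qed

lemma holder_nn:
  fixes K F :: "'a \<Rightarrow> real"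
  assumes Km[measurable]: "K \<in> borel_measurable M" and Fm[measurable]: "F \<in> borel_measurable M"
    and K0: "\<And>y. K y \<ge> 0" and F0: "\<And>y. F y \<ge> 0"
    and p: "p > 1" and q: "q > 1" and pq: "1/p + 1/q = 1"
    and A: "(\<integral>\<^sup>+y. ennreal (K y powr q) \<partial>M) \<le> ennreal Ab" and Ab: "Ab > 0"
    and B: "(\<integral>\<^sup>+y. ennreal (F y powr p) \<partial>M) = ennreal Bb" and Bb: "Bb \<ge> 0"
  shows "(\<integral>\<^sup>+y. ennreal (K y * F y) \<partial>M) \<le> ennreal (Ab powr (1/q) * Bb powr (1/p))"
proof (cases "Bb = 0")
  case True
  then have "AE y in M. ennreal (F y powr p) = 0"
    using B by (subst nn_integral_0_iff_AE[symmetric]) auto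
  then have "AE y in M. ennreal (K y * F y) = 0"
    by eventually_elim (use F0 in auto)
  then have "(\<integral>\<^sup>+y. ennreal (K y * F y) \<partial>M) = 0"
    by (subst nn_integral_0_iff_AE) auto
  then show ?thesis by simp
next
  case False
  then have Bp: "Bb > 0" using Bb by simp
  define al where "al = Ab powr (1/q)"
  define be where "be = Bb powr (1/p)"
  have alp: "al > 0" and bep: "be > 0" using Ab Bp by (auto simp: al_def be_def)
  have alq: "al powr q = Ab" using Ab q by (simp add: al_def powr_powr)
  have bep': "be powr p = Bb" using Bp p by (simp add: be_def powr_powr)
  define c1 where "c1 = al * be / (Ab * q)"
  define c2 where "c2 = al * be / (Bb * p)"
  have c1p: "c1 \<ge> 0" and c2p: "c2 \<ge> 0" using alp bep Ab Bp p q by (auto simp: c1_def c2_def)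
  have pt: "K y * F y \<le> c1 * K y powr q + c2 * F y powr p" for y
  proof -
    have "(K y / al) * (F y / be) \<le> (K y / al) powr q / q + (F y / be) powr p / p"
      by (rule Youngs_inequality) (use p q pq K0 F0 alp bep in auto)
    also have "\<dots> = K y powr q / (Ab * q) + F y powr p / (Bb * p)"
      using K0[of y] F0[of y] alp bep by (simp add: powr_divide alq bep')
    finally have "(K y / al) * (F y / be) \<le> K y powr q / (Ab * q) + F y powr p / (Bb * p)" .
    then have "al * be * ((K y / al) * (F y / be)) \<le> al * be * (K y powr q / (Ab * q) + F y powr p / (Bb * p))"
      using alp bep by (intro mult_left_mono) auto
    moreover have "al * be * ((K y / al) * (F y / be)) = K y * F y" using alp bep by simp
    moreover have "al * be * (K y powr q / (Ab * q) + F y powr p / (Bb * p)) = c1 * K y powr q + c2 * F y powr p"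
      by (simp add: c1_def c2_def distrib_left)
    ultimately show ?thesis by simp
  qed
  have "(\<integral>\<^sup>+y. ennreal (K y * F y) \<partial>M) \<le> (\<integral>\<^sup>+y. ennreal c1 * ennreal (K y powr q) + ennreal c2 * ennreal (F y powr p) \<partial>M)"
  proof (rule nn_integral_mono)
    fix y
    have "ennreal (K y * F y) \<le> ennreal (c1 * K y powr q + c2 * F y powr p)" by (rule ennreal_leI) (rule pt)
    also have "\<dots> = ennreal c1 * ennreal (K y powr q) + ennreal c2 * ennreal (F y powr p)"
      using c1p c2p by (simp add: ennreal_plus ennreal_mult)
    finally show "ennreal (K y * F y) \<le> ennreal c1 * ennreal (K y powr q) + ennreal c2 * ennreal (F y powr p)" .
  qed
  also have "\<dots> = ennreal c1 * (\<integral>\<^sup>+y. ennreal (K y powr q) \<partial>M) + ennreal c2 * (\<integral>\<^sup>+y. ennreal (F y powr p) \<partial>M)"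
    by (simp add: nn_integral_add nn_integral_cmult)
  also have "\<dots> \<le> ennreal c1 * ennreal Ab + ennreal c2 * ennreal Bb"
    using A B by (intro add_mono mult_left_mono) auto
  also have "\<dots> = ennreal (c1 * Ab + c2 * Bb)"
    using c1p c2p Ab Bb by (simp add: ennreal_plus ennreal_mult)
  also have "c1 * Ab + c2 * Bb = al * be * (1/q + 1/p)"
    using Ab Bp p q by (simp add: c1_def c2_def distrib_left)
  also have "\<dots> = al * be" using pq by simp
  finally show ?thesis by (simp add: al_def be_def)
qed

lemma prodbound:
  fixes r a :: "nat \<Rightarrow> real"
  assumes fin: "finite J" and ne: "J \<noteq> {}" and r: "\<And>j. j \<in> J \<Longrightarrow> r j > 0"
    and a: "\<And>j. j \<in> J \<Longrightarrow> a j \<ge> 0" and q: "q > 0"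
  shows "inverse (\<Prod>j\<in>J. r j powr a j) powr q \<le> (\<Sum>j\<in>J. r j powr (- (sum a J * q)))"
proof -
  define r0 where "r0 = Min (r ` J)"
  have "r0 \<in> r ` J" unfolding r0_def using fin ne by (intro Min_in) auto
  then obtain j0 where j0: "j0 \<in> J" "r0 = r j0" by auto
  have r0p: "r0 > 0" using j0 r by auto
  have r0le: "r0 \<le> r j" if "j \<in> J" for j unfolding r0_def using fin that by auto
  have "r0 powr sum a J = (\<Prod>j\<in>J. r0 powr a j)" using r0p by (simp add: powr_sum)
  also have "\<dots> \<le> (\<Prod>j\<in>J. r j powr a j)"
    by (rule prod_mono) (use r0le r0p a in \<open>auto intro: powr_mono2\<close>)
  finally have le1: "r0 powr sum a J \<le> (\<Prod>j\<in>J. r j powr a j)" .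
  have "inverse (\<Prod>j\<in>J. r j powr a j) \<le> inverse (r0 powr sum a J)"
    using le1 r0p by (intro le_imp_inverse_le) auto
  then have "inverse (\<Prod>j\<in>J. r j powr a j) powr q \<le> inverse (r0 powr sum a J) powr q"
    using q by (intro powr_mono2) (auto intro!: prod_nonneg)
  also have "inverse (r0 powr sum a J) powr q = r0 powr (- (sum a J * q))"
    using r0p by (simp add: powr_minus[symmetric] powr_powr)
  also have "\<dots> \<le> (\<Sum>j\<in>J. r j powr (- (sum a J * q)))"
    unfolding j0(2) by (rule member_le_sum) (use j0 fin in auto)
  finally show ?thesis .
qed

lemma alg:
  fixes t q bt A :: real and n m :: nat
  assumes t: "t > 0" and q: "q > 0" and n: "n \<ge> 1" and bt: "bt < 1"
    and hb: "- real n * q / 2 + (real n - 1) / 2 + (1 - bt) / 2 = - q / 2"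
    and A: "A = sqrt (4 * pi / q)"
  shows "(4 * pi * t) powr (- real n / 2 * q) * real m *
      (sqrt (pi / (q / (4 * t))) ^ (n - 1) * (2 * (sqrt t powr (1 - bt) / (1 - bt)) + sqrt t powr (- bt) * sqrt (pi / (q / (4 * t)))))
    = ((4 * pi) powr (- real n / 2 * q) * real m * A ^ (n - 1) * (2 / (1 - bt) + A)) * t powr (- q / 2)"
proof -
  have st: "sqrt t = t powr (1/2)" using t by (simp add: powr_half_sqrt)
  have s1: "sqrt (pi / (q / (4 * t))) = A * t powr (1/2)"
    using t q by (simp add: A st[symmetric] real_sqrt_mult[symmetric] field_simps)
  have s2: "(A * t powr (1/2)) ^ (n - 1) = A ^ (n - 1) * t powr ((real n - 1) / 2)"
    using t n by (simp add: power_mult_distrib powr_power of_nat_diff)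
  have s3: "sqrt t powr (1 - bt) = t powr ((1 - bt) / 2)" using t by (simp add: st powr_powr)
  have s4: "sqrt t powr (- bt) * (A * t powr (1/2)) = A * t powr ((1 - bt) / 2)"
    using t by (simp add: st powr_powr mult.commute mult.left_commute diff_divide_distrib flip: powr_add)
  have s5: "(4 * pi * t) powr (- real n / 2 * q) = (4 * pi) powr (- real n / 2 * q) * t powr (- real n / 2 * q)"
    using t by (simp add: powr_mult)
  have s6: "t powr (- real n / 2 * q) * t powr ((real n - 1) / 2) * t powr ((1 - bt) / 2) = t powr (- q / 2)"
    using hb by (simp flip: powr_add)
  have gen: "C * T1 * real m * (A ^ (n - 1) * T2 * (2 * (T3 / (1 - bt)) + A * T3))
      = (C * real m * A ^ (n - 1) * (2 / (1 - bt) + A)) * (T1 * T2 * T3)" for C T1 T2 T3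
    using bt by (simp add: field_simps)
  show ?thesis
    unfolding s1 s2 s3 s4 s5 gen s6 ..
qed

lemma pointwise:
  fixes xb :: "nat \<Rightarrow> real ^ 'n::finite" and x :: "real ^ 'n"
  assumes n3: "CARD('n) \<ge> 3" and pn: "p > real CARD('n)"
    and a0: "\<And>j. j < m \<Longrightarrow> a j \<ge> 0"
    and sa: "(\<Sum>j<m. a j) = 1 - real CARD('n) / p"
    and qd: "q = p / (p - 1)" and btd: "bt = (1 - real CARD('n) / p) * q"
    and Ad: "A = sqrt (4 * pi / q)"
    and K0d: "K0 = (4 * pi) powr (- real CARD('n) / 2 * q) * real m * A ^ (CARD('n) - 1) * (2 / (1 - bt) + A)"
    and g: "in_Lpw p (weight m a xb) g" and t: "t > 0"
  shows "\<bar>heat_conv g t x\<bar> \<le> K0 powr (1/q) * t powr (- 1/2) * Lpw_norm p (weight m a xb) g"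
proof -
  define n where "n = CARD('n)"
  have n3': "n \<ge> 3" using n3 by (simp add: n_def)
  have pn': "p > real n" using pn by (simp add: n_def)
  have p1: "p > 1" using pn' n3' by linarith
  have q1: "q > 1" using p1 by (simp add: qd)
  have pq: "1/p + 1/q = 1" using p1 by (simp add: qd field_simps)
  have btq: "bt = (p - real n) / (p - 1)" using p1 by (simp add: btd qd n_def field_simps)
  have bt0: "bt > 0" using btq p1 pn' by simp
  have bt1: "bt < 1" unfolding btq using p1 n3' by (subst divide_less_eq_1_pos) auto
  have hb: "- real n * q / 2 + (real n - 1) / 2 + (1 - bt) / 2 = - q / 2"
  proof -
    have d1: "q * (p - 1) = p" using p1 by (simp add: qd)
    have d2: "bt * (p - 1) = p - real n" using p1 by (simp add: btq)
    have "(- real n * q + real n - bt + q) * (p - 1) = - real n * (q * (p - 1)) + real n * (p - 1) - bt * (p - 1) + q * (p - 1)"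
      by (simp add: algebra_simps)
    also have "\<dots> = 0" unfolding d1 d2 by (simp add: algebra_simps)
    finally have "- real n * q + real n - bt + q = 0" using p1 by simp
    then show ?thesis by (simp add: field_simps)
  qed
  have sa': "sum a {..<m} * q = bt" using sa by (simp add: btd n_def)
  have m0: "m > 0"
  proof (rule ccontr)
    assume "\<not> m > 0" then have "m = 0" by simp
    then have "1 - real n / p = 0" using sa by (simp add: n_def)
    then show False using pn' p1 by (simp add: field_simps)
  qed
  define w where "w = weight m a xb"
  have gm: "g \<in> borel_measurable borel" using g by (simp add: in_Lpw_def)
  have gi: "integrable lborel (\<lambda>y. \<bar>w y * g y\<bar> powr p)" using g by (simp add: in_Lpw_def w_def)
  have wm[measurable]: "w \<in> borel_measurable borel" unfolding w_def weight_def by measurable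
  note gm[measurable]
  define e :: "real ^ 'n" where "e = (SOME b. b \<in> Basis)"
  have e: "e \<in> Basis" unfolding e_def by (rule SOME_Basis)
  define k where "k = q / (4 * t)"
  have k: "k > 0" using q1 t by (simp add: k_def)
  define Ct where "Ct = (4 * pi * t) powr (- real n / 2 * q)"
  have Ct: "Ct \<ge> 0" by (simp add: Ct_def)
  define K where "K y = heat t (x - y) * inverse (w y)" for y
  define F where "F y = \<bar>w y * g y\<bar>" for y
  have w0: "w y \<ge> 0" for y unfolding w_def weight_def by (rule prod_nonneg) auto
  have h0: "heat t v \<ge> 0" for v :: "real ^ 'n" by (simp add: heat_def)
  have K0: "K y \<ge> 0" for y using w0[of y] h0[of "x - y"] by (simp add: K_def)
  have F0: "F y \<ge> 0" for y by (simp add: F_def)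
  have Km[measurable]: "K \<in> borel_measurable borel" unfolding K_def[abs_def] heat_def by measurable
  have Fm[measurable]: "F \<in> borel_measurable borel" unfolding F_def[abs_def] by measurable
  have wpos: "w y > 0" if "\<And>j. j < m \<Longrightarrow> norm (y - xb j) > 0" for y
    unfolding w_def weight_def by (rule prod_pos) (use that in auto)
  have S1: "ennreal (K y powr q) \<le> ennreal Ct * (\<Sum>j<m. ennreal (exp (- k * (norm (x - y))\<^sup>2)) * f1 bt ((y - xb j) \<bullet> e))" for y
  proof (cases "w y = 0")
    case True then show ?thesis by (simp add: K_def)
  next
    case False
    have r: "norm (y - xb j) > 0" if j: "j < m" for j
    proof (rule ccontr)
      assume "\<not> norm (y - xb j) > 0"
      then have "norm (y - xb j) powr a j = 0" by simp
      then have "w y = 0" using j unfolding w_def weight_def by (auto simp: prod_zero_iff)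
      with False show False by simp
    qed
    have hpow: "heat t (x - y) powr q = Ct * exp (- k * (norm (x - y))\<^sup>2)"
    proof -
      have "heat t (x - y) powr q = ((4 * pi * t) powr (- real n / 2)) powr q * exp (- (norm (x - y))\<^sup>2 / (4 * t)) powr q"
        unfolding heat_def n_def by (rule powr_mult)
      also have "exp (- (norm (x - y))\<^sup>2 / (4 * t)) powr q = exp (- k * (norm (x - y))\<^sup>2)"
        by (simp add: powr_def k_def)
      also have "((4 * pi * t) powr (- real n / 2)) powr q = Ct"
        by (simp add: Ct_def powr_powr)
      finally show ?thesis .
    qed
    have ipow: "inverse (w y) powr q \<le> (\<Sum>j<m. norm (y - xb j) powr (- bt))"
    proof -
      have ne: "{..<m} \<noteq> {}" using m0 by auto
      show ?thesis
        using prodbound[OF _ ne, of "\<lambda>j. norm (y - xb j)" a q] r a0 q1 sa'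
        by (simp add: w_def weight_def)
    qed
    have Kpow: "K y powr q = heat t (x - y) powr q * inverse (w y) powr q"
      unfolding K_def by (rule powr_mult)
    have fj: "ennreal (norm (y - xb j) powr (- bt)) \<le> f1 bt ((y - xb j) \<bullet> e)" if j: "j < m" for j
    proof (cases "(y - xb j) \<bullet> e = 0")
      case True then show ?thesis by (simp add: f1_def)
    next
      case False
      have "norm (y - xb j) powr (- bt) \<le> \<bar>(y - xb j) \<bullet> e\<bar> powr (- bt)"
        by (rule powr_mono2') (use bt0 False Basis_le_norm[OF e, of "y - xb j"] in auto)
      then show ?thesis using False by (simp add: f1_def)
    qed
    define E where "E = exp (- k * (norm (x - y))\<^sup>2)"
    have "ennreal (K y powr q) = ennreal (Ct * E * inverse (w y) powr q)"
      by (simp add: Kpow hpow E_def)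
    also have "\<dots> \<le> ennreal (Ct * E * (\<Sum>j<m. norm (y - xb j) powr (- bt)))"
      by (rule ennreal_leI, rule mult_left_mono[OF ipow]) (use Ct in \<open>simp add: E_def\<close>)
    also have "\<dots> = ennreal Ct * (\<Sum>j<m. ennreal E * ennreal (norm (y - xb j) powr (- bt)))"
      using Ct by (simp add: ennreal_mult E_def sum_distrib_left mult.assoc sum_ennreal[symmetric] del: sum_ennreal)
    also have "\<dots> \<le> ennreal Ct * (\<Sum>j<m. ennreal E * f1 bt ((y - xb j) \<bullet> e))"
      by (intro mult_left_mono sum_mono) (use fj in auto)
    finally show ?thesis by (simp add: E_def)
  qed
  define NDb where "NDb = sqrt (pi / k) ^ (n - 1) * (2 * (sqrt t powr (1 - bt) / (1 - bt)) + sqrt t powr (- bt) * sqrt (pi / k))"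
  have NDb0: "NDb \<ge> 0" using bt1 k unfolding NDb_def by (intro mult_nonneg_nonneg add_nonneg_nonneg divide_nonneg_nonneg) auto
  have S2: "(\<integral>\<^sup>+y. ennreal (K y powr q) \<partial>lborel) \<le> ennreal (Ct * real m * NDb)"
  proof -
    have "(\<integral>\<^sup>+y. ennreal (K y powr q) \<partial>lborel)
       \<le> (\<integral>\<^sup>+y. ennreal Ct * (\<Sum>j<m. ennreal (exp (- k * (norm (x - y))\<^sup>2)) * f1 bt ((y - xb j) \<bullet> e)) \<partial>lborel)"
      by (rule nn_integral_mono) (rule S1)
    also have "\<dots> = ennreal Ct * (\<Sum>j<m. (\<integral>\<^sup>+y. ennreal (exp (- k * (norm (x - y))\<^sup>2)) * f1 bt ((y - xb j) \<bullet> e) \<partial>lborel))"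
      by (simp add: nn_integral_cmult nn_integral_sum)
    also have "\<dots> \<le> ennreal Ct * (\<Sum>j<m. ennreal NDb)"
    proof (intro mult_left_mono sum_mono)
      fix j
      show "(\<integral>\<^sup>+y. ennreal (exp (- k * (norm (x - y))\<^sup>2)) * f1 bt ((y - xb j) \<bullet> e) \<partial>lborel) \<le> ennreal NDb"
        using ND[OF e k _ bt1, of "sqrt t" x "xb j"] bt0 t by (simp add: NDb_def n_def)
    qed simp
    also have "\<dots> = ennreal (Ct * real m * NDb)"
      using Ct NDb0 by (simp add: ennreal_mult ennreal_of_nat_eq_real_of_nat mult.assoc)
    finally show ?thesis .
  qed
  define Ab where "Ab = K0 * t powr (- q / 2)"
  have CtAb: "Ct * real m * NDb = Ab"
    unfolding Ab_def K0d Ct_def NDb_def k_def n_def[symmetric]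
    by (rule alg[OF t _ _ bt1 hb Ad]) (use q1 n3' n_def in auto)
  have A0: "A > 0" using q1 by (simp add: Ad)
  have K0p: "K0 > 0" unfolding K0d using m0 A0 bt1 by (intro mult_pos_pos add_pos_pos divide_pos_pos zero_less_power) auto
  have Abp: "Ab > 0" using K0p t by (simp add: Ab_def)
  define B where "B = (\<integral>y. \<bar>w y * g y\<bar> powr p \<partial>lborel)"
  have B0: "B \<ge> 0" unfolding B_def by (rule integral_nonneg_AE) auto
  have Bn: "(\<integral>\<^sup>+y. ennreal (F y powr p) \<partial>lborel) = ennreal B"
    unfolding B_def F_def by (rule nn_integral_eq_integral[OF gi]) auto
  have H: "(\<integral>\<^sup>+y. ennreal (K y * F y) \<partial>lborel) \<le> ennreal (Ab powr (1/q) * B powr (1/p))"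
  proof -
    have Km': "K \<in> borel_measurable lborel" and Fm': "F \<in> borel_measurable lborel" by measurable
    show ?thesis
    by (rule holder_nn[OF Km' Fm' K0 F0 p1 q1 pq _ Abp Bn B0]) (use S2 CtAb in simp)
  qed
  have Abq: "Ab powr (1/q) = K0 powr (1/q) * t powr (- 1/2)"
    using K0p t q1 by (simp add: Ab_def powr_mult powr_powr)
  have S5: "AE y in lborel. ennreal (norm (heat t (x - y) * g y)) = ennreal (K y * F y)"
    using AE_not_in[OF finite_imp_null_set_lborel[of "xb ` {..<m}", OF finite_imageI[OF finite_lessThan]]]
  proof eventually_elim
    case (elim y)
    then have "\<And>j. j < m \<Longrightarrow> norm (y - xb j) > 0" by auto
    then have "w y > 0" by (rule wpos)
    then have "K y * F y = \<bar>heat t (x - y) * g y\<bar>"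
      using h0[of "x - y"] by (simp add: K_def F_def abs_mult)
    then show ?case by simp
  qed
  define bd where "bd = K0 powr (1/q) * t powr (- 1/2) * B powr (1/p)"
  have bd0: "bd \<ge> 0" by (simp add: bd_def)
  have "ennreal \<bar>heat_conv g t x\<bar> \<le> ennreal bd"
  proof (cases "integrable lborel (\<lambda>y. heat t (x - y) * g y)")
    case True
    have "ennreal \<bar>heat_conv g t x\<bar> \<le> (\<integral>\<^sup>+y. ennreal (norm (heat t (x - y) * g y)) \<partial>lborel)"
      using integral_norm_bound_ennreal[OF True] by (simp add: heat_conv_def)
    also have "\<dots> = (\<integral>\<^sup>+y. ennreal (K y * F y) \<partial>lborel)"
      by (rule nn_integral_cong_AE[OF S5])
    also have "\<dots> \<le> ennreal bd" using H by (simp add: Abq bd_def)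
    finally show ?thesis .
  next
    case False
    then show ?thesis by (simp add: heat_conv_def not_integrable_integral_eq)
  qed
  then have "\<bar>heat_conv g t x\<bar> \<le> bd" using bd0 by (simp add: ennreal_le_iff)
  moreover have "Lpw_norm p (weight m a xb) g = B powr (1/p)"
    by (simp add: Lpw_norm_def B_def w_def)
  ultimately show ?thesis by (simp add: bd_def)
qed

theorem lemma3:
  fixes p :: real and m :: nat and a :: "nat \<Rightarrow> real"
    and xb :: "nat \<Rightarrow> real ^ 'n::{finite,linorder}"
  assumes "CARD('n) \<ge> 3"
    and "p > real CARD('n)"
    and "\<And>j. j < m \<Longrightarrow> a j \<ge> 0"
    and "(\<Sum>j<m. a j) = 1 - real CARD('n) / p"
    and "\<And>j. j < m \<Longrightarrow> xb j \<in> upper_half"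
  shows "\<exists>c. \<forall>g t. in_Lpw p (weight m a xb) g \<and> t > 0 \<longrightarrow>
           ereal (sqrt t) * Linf_norm (heat_conv g t) \<le> ereal c * ereal (Lpw_norm p (weight m a xb) g)"
proof -
  define q where "q = p / (p - 1)"
  define bt where "bt = (1 - real CARD('n) / p) * q"
  define A where "A = sqrt (4 * pi / q)"
  define K0 where "K0 = (4 * pi) powr (- real CARD('n) / 2 * q) * real m * A ^ (CARD('n) - 1) * (2 / (1 - bt) + A)"
  define c where "c = K0 powr (1/q)"
  have main: "ereal (sqrt t) * Linf_norm (heat_conv g t) \<le> ereal c * ereal (Lpw_norm p (weight m a xb) g)"
    if g: "in_Lpw p (weight m a xb) g" and t: "t > 0" for g t
  proof -
    define N where "N = Lpw_norm p (weight m a xb) g"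
    have pw: "\<bar>heat_conv g t x\<bar> \<le> c * t powr (- 1/2) * N" for x
      unfolding c_def N_def
      by (rule pointwise[OF assms(1,2,3,4) q_def bt_def A_def K0_def g t])
    have gm[measurable]: "g \<in> borel_measurable lborel" using g by (simp add: in_Lpw_def)
    have hm: "heat_conv g t \<in> borel_measurable lborel"
    proof -
      have "(\<lambda>(x, y). heat t (x - y) * g y) \<in> borel_measurable (lborel \<Otimes>\<^sub>M (lborel :: (real ^ 'n::{finite,linorder}) measure))"
        unfolding heat_def by measurable
      then have "(\<lambda>x. \<integral>y. heat t (x - y) * g y \<partial>lborel) \<in> borel_measurable (lborel :: (real ^ 'n::{finite,linorder}) measure)"
        by (rule lborel.borel_measurable_lebesgue_integral)
      then show ?thesis by (simp add: heat_conv_def[abs_def])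
    qed
    have "Linf_norm (heat_conv g t) \<le> ereal (c * t powr (- 1/2) * N)"
      unfolding Linf_norm_def
      by (rule esssup_I) (use hm pw in auto)
    then have "ereal (sqrt t) * Linf_norm (heat_conv g t) \<le> ereal (sqrt t) * ereal (c * t powr (- 1/2) * N)"
      by (rule ereal_mult_left_mono) (use t in simp)
    also have "ereal (sqrt t) * ereal (c * t powr (- 1/2) * N) = ereal c * ereal N"
    proof -
      have "sqrt t * t powr (- 1/2) = 1"
        using t by (simp add: powr_half_sqrt[symmetric] powr_add[symmetric])
      then have "sqrt t * (c * t powr (- 1/2) * N) = c * N" by (simp add: algebra_simps)
      then show ?thesis by simp
    qed
    finally show ?thesis by (simp add: N_def)
  qed
  show ?thesis using main by blast
qed

end
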